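(* Let $\mathcal{C}$ be an additive category, $n\ge1$, and $\mathcal{X}$ a covariantly finite subcategory such that every left $\mathcal{X}$-approximation has a special $n$-cokernel with respect to $\mathcal{X}$; let $\Sigma:\mathcal{C}/\mathcal{X}\to\mathcal{C}/\mathcal{X}$ be the functor described below. Suppose given a commutative diagram in $\mathcal{C}$ $$\begin{array}{ccccccccc} A_0 & \xrightarrow{f_0} & A_1 & \xrightarrow{f_1} & \cdots & \xrightarrow{f_{n-1}} & A_n & \xrightarrow{f_n} & A_{n+1}\\ \downarrow{\scriptstyle h_0} & & \downarrow{\scriptstyle h_1} & & & & \downarrow{\scriptstyle h_n} & & \downarrow{\scriptstyle h_{n+1}}\\ B_0 & \xrightarrow{g_0} & B_1 & \xrightarrow{g_1} & \cdots & \xrightarrow{g_{n-1}} & B_n & \xrightarrow{g_n} & B_{n+1} \end{array}$$ whose rows are right $n$-exact sequences with $f_0$ and $g_0$ $\mathcal{X}$-monic. Let $(-1)^n\underline{a_{n+1}}:A_{n+1}\to\Sigma A_0$ and $(-1)^n\underline{b_{n+1}}:B_{n+1}\to\Sigma B_0$ be the last morphisms of standard right $(n+2)$-angles associated with the two rows (for any choices of comparison morphisms). Then $$(\underline{h_0},\underline{h_1},\dots,\underline{h_{n+1}})$$ is a morphism between the two standard right $(n+2)$-angles $A_0\xrightarrow{\underline{f_0}}A_1\to\cdots\xrightarrow{\underline{f_n}}A_{n+1}\xrightarrow{(-1)^n\underline{a_{n+1}}}\Sigma A_0$ and $B_0\xrightarrow{\underline{g_0}}B_1\to\cdots\xrightarrow{\underline{g_n}}B_{n+1}\xrightarrow{(-1)^n\underline{b_{n+1}}}\Sigma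 B_0$ in $\mathcal{C}/\mathcal{X}$; in particular $\Sigma\underline{h_0}\cdot\underline{a_{n+1}}=\underline{b_{n+1}}\cdot\underline{h_{n+1}}$.
   Context: Subcategories are full and closed under isomorphisms, direct sums and direct summands. $\mathcal{C}/\mathcal{X}$ is the quotient by morphisms factoring through objects of $\mathcal{X}$; $\underline{f}$ is the class of $f$. $f:A\to B$ is $\mathcal{X}$-monic if every morphism $A\to X$ with $X\in\mathcal{X}$ factors through $f$; a left $\mathcal{X}$-approximation of $A$ is an $\mathcal{X}$-monic $A\to X$ with $X\in\mathcal{X}$; $\mathcal{X}$ is covariantly finite if every object has one. A weak cokernel of $f$ is $g$ with $gf=0$ through which every $h$ with $hf=0$ factors. A sequence $A_0\xrightarrow{f_0}\cdots\xrightarrow{f_n}A_{n+1}$ is right $n$-exact ($(f_1,\dots,f_n)$ is an $n$-cokernel of $f_0$) if $f_k$ is a weak cokernel of $f_{k-1}$ for $1\le k\le n-1$ and $f_n$ is a cokernel of $f_{n-1}$; $f_0$ has a special $n$-cokernel w.r.t. $\mathcal{X}$ if it has an $n$-cokernel whose intermediate objects $X_2,\dots,X_n$ lie in $\mathcal{X}$. The functor $\Sigma$: for each $A\in\mathcal{C}$ fix a right $n$-exact sequence $A\xrightarrow{\alpha_0}X_1\xrightarrow{\alpha_1}\cdots\xrightarrow{\alpha_{n-1}}X_n\xrightarrow{\alpha_n}\Sigma A$ with $\alpha_0$ a left $\mathcal{X}$-approximation and $X_i\in\mathcal{X}$; for $f:A\to A'$ choose a commutative ladder from this sequence to the one of $A'$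 starting with $f$ and ending with $g:\Sigma A\to\Sigma A'$, and put $\Sigma\underline f=\underline g$ (this is a well-defined additive functor). Standard right $(n+2)$-angle: given a right $n$-exact sequence $A_0\xrightarrow{f_0}A_1\xrightarrow{f_1}\cdots\xrightarrow{f_n}A_{n+1}$ with $f_0$ $\mathcal{X}$-monic, choose morphisms $a_i$ ($1\le i\le n+1$) forming a commutative ladder from it to the fixed sequence $A_0\xrightarrow{\alpha_0}X_1\to\cdots\to X_n\xrightarrow{\alpha_n}\Sigma A_0$ with $1_{A_0}$ in the first position and $a_{n+1}:A_{n+1}\to\Sigma A_0$ last. The sequence $A_0\xrightarrow{\underline{f_0}}A_1\xrightarrow{\underline{f_1}}\cdots\xrightarrow{\underline{f_n}}A_{n+1}\xrightarrow{(-1)^n\underline{a_{n+1}}}\Sigma A_0$ in $\mathcal{C}/\mathcal{X}$ is a standard right $(n+2)$-angle. *)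

theory Defs
  imports Main
begin

text \<open>A category is given by a set of objects, a set of morphisms, source and
target maps, composition (cmp g f = g after f), identities, and the
preadditive structure on each hom-set (addition, zero morphisms, negation).\<close>

record ('o, 'm) addcat =
  ob    :: "'o set"
  mor   :: "'m set"
  src   :: "'m \<Rightarrow> 'o"
  tgt   :: "'m \<Rightarrow> 'o"
  cmp   :: "'m \<Rightarrow> 'm \<Rightarrow> 'm"
  idm   :: "'o \<Rightarrow> 'm"
  madd  :: "'m \<Rightarrow> 'm \<Rightarrow> 'm"
  mzero :: "'o \<Rightarrow> 'o \<Rightarrow> 'm"
  mneg  :: "'m \<Rightarrow> 'm"

definition Hom :: "('o, 'm) addcat \<Rightarrow> 'o \<Rightarrow> 'o \<Rightarrow> 'm set" where
  "Hom C A B = {f \<in> mor C. src C f = A \<and> tgt C f = B}"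

definition mdiff :: "('o, 'm) addcat \<Rightarrow> 'm \<Rightarrow> 'm \<Rightarrow> 'm" where
  "mdiff C f g = madd C f (mneg C g)"

definition is_biproduct :: "('o, 'm) addcat \<Rightarrow> 'o \<Rightarrow> 'o \<Rightarrow> 'o \<Rightarrow> bool" where
  "is_biproduct C S A B \<longleftrightarrow> S \<in> ob C \<and>
     (\<exists>i1 i2 p1 p2. i1 \<in> Hom C A S \<and> i2 \<in> Hom C B S \<and> p1 \<in> Hom C S A \<and> p2 \<in> Hom C S B \<and>
        cmp C p1 i1 = idm C A \<and> cmp C p2 i2 = idm C B \<and>
        cmp C p2 i1 = mzero C A B \<and> cmp C p1 i2 = mzero C B A \<and>
        madd C (cmp C i1 p1) (cmp C i2 p2) = idm C S)"

definition additive_category :: "('o, 'm) addcat \<Rightarrow> bool" where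
  "additive_category C \<longleftrightarrow>
     \<comment> \<open>category axioms\<close>
     (\<forall>f \<in> mor C. src C f \<in> ob C \<and> tgt C f \<in> ob C) \<and>
     (\<forall>A \<in> ob C. idm C A \<in> Hom C A A) \<and>
     (\<forall>A \<in> ob C. \<forall>B \<in> ob C. \<forall>D \<in> ob C. \<forall>f \<in> Hom C A B. \<forall>g \<in> Hom C B D.
        cmp C g f \<in> Hom C A D) \<and>
     (\<forall>A \<in> ob C. \<forall>B \<in> ob C. \<forall>D \<in> ob C. \<forall>E \<in> ob C.
        \<forall>f \<in> Hom C A B. \<forall>g \<in> Hom C B D. \<forall>h \<in> Hom C D E.
        cmp C h (cmp C g f) = cmp C (cmp C h g) f) \<and>
     (\<forall>A \<in> ob C. \<forall>B \<in> ob C. \<forall>f \<in> Hom C A B.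
        cmp C f (idm C A) = f \<and> cmp C (idm C B) f = f) \<and>
     \<comment> \<open>each hom-set is an abelian group\<close>
     (\<forall>A \<in> ob C. \<forall>B \<in> ob C.
        mzero C A B \<in> Hom C A B \<and>
        (\<forall>f \<in> Hom C A B. \<forall>g \<in> Hom C A B. madd C f g \<in> Hom C A B) \<and>
        (\<forall>f \<in> Hom C A B. mneg C f \<in> Hom C A B) \<and>
        (\<forall>f \<in> Hom C A B. \<forall>g \<in> Hom C A B. \<forall>h \<in> Hom C A B.
           madd C (madd C f g) h = madd C f (madd C g h)) \<and>
        (\<forall>f \<in> Hom C A B. \<forall>g \<in> Hom C A B. madd C f g = madd C g f) \<and>
        (\<forall>f \<in> Hom C A B. madd C f (mzero C A B) = f) \<and>
        (\<forall>f \<in> Hom C A B. madd C f (mneg C f) = mzero C A B)) \<and>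
     \<comment> \<open>composition is bilinear\<close>
     (\<forall>A \<in> ob C. \<forall>B \<in> ob C. \<forall>D \<in> ob C.
        \<forall>f \<in> Hom C A B. \<forall>f' \<in> Hom C A B. \<forall>g \<in> Hom C B D. \<forall>g' \<in> Hom C B D.
        cmp C g (madd C f f') = madd C (cmp C g f) (cmp C g f') \<and>
        cmp C (madd C g g') f = madd C (cmp C g f) (cmp C g' f)) \<and>
     \<comment> \<open>zero object and binary biproducts\<close>
     (\<exists>Z \<in> ob C. idm C Z = mzero C Z Z) \<and>
     (\<forall>A \<in> ob C. \<forall>B \<in> ob C. \<exists>S. is_biproduct C S A B)"

definition is_iso :: "('o, 'm) addcat \<Rightarrow> 'm \<Rightarrow> bool" where
  "is_iso C f \<longleftrightarrow> f \<in> mor C \<and>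
     (\<exists>g \<in> Hom C (tgt C f) (src C f). cmp C g f = idm C (src C f) \<and> cmp C f g = idm C (tgt C f))"

text \<open>A (full) subcategory, given by its class of objects, closed under
isomorphisms, (binary) direct sums and direct summands.\<close>

definition subcategory :: "('o, 'm) addcat \<Rightarrow> 'o set \<Rightarrow> bool" where
  "subcategory C X \<longleftrightarrow> X \<subseteq> ob C \<and>
     (\<forall>f. is_iso C f \<longrightarrow> src C f \<in> X \<longrightarrow> tgt C f \<in> X) \<and>
     (\<forall>S A B. is_biproduct C S A B \<longrightarrow> A \<in> X \<longrightarrow> B \<in> X \<longrightarrow> S \<in> X) \<and>
     (\<forall>S A B. is_biproduct C S A B \<longrightarrow> S \<in> X \<longrightarrow> A \<in> ob C \<longrightarrow> B \<in> ob C \<longrightarrow> A \<in> X)"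

definition factors_through :: "('o, 'm) addcat \<Rightarrow> 'o set \<Rightarrow> 'm \<Rightarrow> bool" where
  "factors_through C X f \<longleftrightarrow>
     (\<exists>Y \<in> X. \<exists>u \<in> Hom C (src C f) Y. \<exists>v \<in> Hom C Y (tgt C f). f = cmp C v u)"

definition quot_eq :: "('o, 'm) addcat \<Rightarrow> 'o set \<Rightarrow> 'm \<Rightarrow> 'm \<Rightarrow> bool" where
  "quot_eq C X f g \<longleftrightarrow> f \<in> mor C \<and> g \<in> mor C \<and>
     src C f = src C g \<and> tgt C f = tgt C g \<and> factors_through C X (mdiff C f g)"

definition X_monic :: "('o, 'm) addcat \<Rightarrow> 'o set \<Rightarrow> 'm \<Rightarrow> bool" where
  "X_monic C X f \<longleftrightarrow> f \<in> mor C \<and>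
     (\<forall>Y \<in> X. \<forall>u \<in> Hom C (src C f) Y. \<exists>v \<in> Hom C (tgt C f) Y. u = cmp C v f)"

definition left_approx :: "('o, 'm) addcat \<Rightarrow> 'o set \<Rightarrow> 'o \<Rightarrow> 'm \<Rightarrow> bool" where
  "left_approx C X A f \<longleftrightarrow> X_monic C X f \<and> src C f = A \<and> tgt C f \<in> X"

definition covariantly_finite :: "('o, 'm) addcat \<Rightarrow> 'o set \<Rightarrow> bool" where
  "covariantly_finite C X \<longleftrightarrow> (\<forall>A \<in> ob C. \<exists>f. left_approx C X A f)"

definition weak_cokernel :: "('o, 'm) addcat \<Rightarrow> 'm \<Rightarrow> 'm \<Rightarrow> bool" where
  "weak_cokernel C f g \<longleftrightarrow> f \<in> mor C \<and> g \<in> mor C \<and> src C g = tgt C f \<and>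
     cmp C g f = mzero C (src C f) (tgt C g) \<and>
     (\<forall>D \<in> ob C. \<forall>h \<in> Hom C (tgt C f) D. cmp C h f = mzero C (src C f) D \<longrightarrow>
        (\<exists>k \<in> Hom C (tgt C g) D. h = cmp C k g))"

definition cokernel :: "('o, 'm) addcat \<Rightarrow> 'm \<Rightarrow> 'm \<Rightarrow> bool" where
  "cokernel C f g \<longleftrightarrow> f \<in> mor C \<and> g \<in> mor C \<and> src C g = tgt C f \<and>
     cmp C g f = mzero C (src C f) (tgt C g) \<and>
     (\<forall>D \<in> ob C. \<forall>h \<in> Hom C (tgt C f) D. cmp C h f = mzero C (src C f) D \<longrightarrow>
        (\<exists>!k. k \<in> Hom C (tgt C g) D \<and> h = cmp C k g))"

text \<open>A sequence A_0 --f_0--> A_1 --> ... --f_n--> A_{n+1} is encoded by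
functions obj :: nat => 'o and ms :: nat => 'm (only indices up to n+1 resp. n matter).\<close>

definition is_sequence :: "('o, 'm) addcat \<Rightarrow> nat \<Rightarrow> (nat \<Rightarrow> 'o) \<Rightarrow> (nat \<Rightarrow> 'm) \<Rightarrow> bool" where
  "is_sequence C n obj ms \<longleftrightarrow> (\<forall>k \<le> n. ms k \<in> Hom C (obj k) (obj (Suc k)))"

definition right_n_exact :: "('o, 'm) addcat \<Rightarrow> nat \<Rightarrow> (nat \<Rightarrow> 'o) \<Rightarrow> (nat \<Rightarrow> 'm) \<Rightarrow> bool" where
  "right_n_exact C n obj ms \<longleftrightarrow> is_sequence C n obj ms \<and>
     (\<forall>k. 1 \<le> k \<and> k \<le> n - 1 \<longrightarrow> weak_cokernel C (ms (k - 1)) (ms k)) \<and>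
     cokernel C (ms (n - 1)) (ms n)"

definition has_special_n_cokernel :: "('o, 'm) addcat \<Rightarrow> 'o set \<Rightarrow> nat \<Rightarrow> 'm \<Rightarrow> bool" where
  "has_special_n_cokernel C X n f \<longleftrightarrow>
     (\<exists>obj ms. obj 0 = src C f \<and> obj 1 = tgt C f \<and> ms 0 = f \<and> right_n_exact C n obj ms \<and>
        (\<forall>i. 2 \<le> i \<and> i \<le> n \<longrightarrow> obj i \<in> X))"

definition ladder :: "('o, 'm) addcat \<Rightarrow> nat \<Rightarrow> (nat \<Rightarrow> 'o) \<Rightarrow> (nat \<Rightarrow> 'm) \<Rightarrow>
    (nat \<Rightarrow> 'o) \<Rightarrow> (nat \<Rightarrow> 'm) \<Rightarrow> (nat \<Rightarrow> 'm) \<Rightarrow> bool" where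
  "ladder C n obj1 ms1 obj2 ms2 c \<longleftrightarrow>
     (\<forall>i \<le> Suc n. c i \<in> Hom C (obj1 i) (obj2 i)) \<and>
     (\<forall>i \<le> n. cmp C (c (Suc i)) (ms1 i) = cmp C (ms2 i) (c i))"

text \<open>The fixed choice of sequences defining Sigma: for every object A,
A = SObj A 0 --SMor A 0--> SObj A 1 --> ... --> SObj A n --SMor A n--> SObj A (n+1) = Sigma A,
right n-exact, SMor A 0 a left X-approximation, SObj A i in X for 1 <= i <= n.\<close>

definition sigma_data :: "('o, 'm) addcat \<Rightarrow> 'o set \<Rightarrow> nat \<Rightarrow>
    ('o \<Rightarrow> nat \<Rightarrow> 'o) \<Rightarrow> ('o \<Rightarrow> nat \<Rightarrow> 'm) \<Rightarrow> bool" where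
  "sigma_data C X n SObj SMor \<longleftrightarrow>
     (\<forall>A \<in> ob C. SObj A 0 = A \<and> right_n_exact C n (SObj A) (SMor A) \<and>
        left_approx C X A (SMor A 0) \<and> (\<forall>i. 1 \<le> i \<and> i \<le> n \<longrightarrow> SObj A i \<in> X))"

definition sign_mor :: "('o, 'm) addcat \<Rightarrow> nat \<Rightarrow> 'm \<Rightarrow> 'm" where
  "sign_mor C n f = (if even n then f else mneg C f)"

end

theory Submission
  imports Defs
begin

locale ac = fixes C :: "('o,'m) addcat" assumes cat: "additive_category C"
begin

lemma ax:
  "\<forall>f \<in> mor C. src C f \<in> ob C \<and> tgt C f \<in> ob C"
  "\<forall>A \<in> ob C. idm C A \<in> Hom C A A"
  "\<forall>A \<in> ob C. \<forall>B \<in> ob C. \<forall>D \<in> ob C. \<forall>f \<in> Hom C A B. \<forall>g \<in> Hom C B D. cmp C g f \<in> Hom C A D"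
  "\<forall>A \<in> ob C. \<forall>B \<in> ob C. \<forall>D \<in> ob C. \<forall>E \<in> ob C.
        \<forall>f \<in> Hom C A B. \<forall>g \<in> Hom C B D. \<forall>h \<in> Hom C D E.
        cmp C h (cmp C g f) = cmp C (cmp C h g) f"
  "\<forall>A \<in> ob C. \<forall>B \<in> ob C. \<forall>f \<in> Hom C A B.
        cmp C f (idm C A) = f \<and> cmp C (idm C B) f = f"
  "\<forall>A \<in> ob C. \<forall>B \<in> ob C.
        mzero C A B \<in> Hom C A B \<and>
        (\<forall>f \<in> Hom C A B. \<forall>g \<in> Hom C A B. madd C f g \<in> Hom C A B) \<and>
        (\<forall>f \<in> Hom C A B. mneg C f \<in> Hom C A B) \<and>
        (\<forall>f \<in> Hom C A B. \<forall>g \<in> Hom C A B. \<forall>h \<in> Hom C A B.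
           madd C (madd C f g) h = madd C f (madd C g h)) \<and>
        (\<forall>f \<in> Hom C A B. \<forall>g \<in> Hom C A B. madd C f g = madd C g f) \<and>
        (\<forall>f \<in> Hom C A B. madd C f (mzero C A B) = f) \<and>
        (\<forall>f \<in> Hom C A B. madd C f (mneg C f) = mzero C A B)"
  "\<forall>A \<in> ob C. \<forall>B \<in> ob C. \<forall>D \<in> ob C.
        \<forall>f \<in> Hom C A B. \<forall>f' \<in> Hom C A B. \<forall>g \<in> Hom C B D. \<forall>g' \<in> Hom C B D.
        cmp C g (madd C f f') = madd C (cmp C g f) (cmp C g f') \<and>
        cmp C (madd C g g') f = madd C (cmp C g f) (cmp C g' f)"
  using cat unfolding additive_category_def apply -
  by ((elim conjE, assumption))+

lemma hom_ob: "f \<in> Hom C A B \<Longrightarrow> A \<in> ob C \<and> B \<in> ob C"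
  using ax(1) unfolding Hom_def by auto

lemma hom_mor: "f \<in> Hom C A B \<Longrightarrow> f \<in> mor C \<and> src C f = A \<and> tgt C f = B"
  unfolding Hom_def by auto

lemma id_hom: "A \<in> ob C \<Longrightarrow> idm C A \<in> Hom C A A" using ax(2) by blast

lemma comp_hom: "f \<in> Hom C A B \<Longrightarrow> g \<in> Hom C B D \<Longrightarrow> cmp C g f \<in> Hom C A D"
proof -
  assume f: "f \<in> Hom C A B" and g: "g \<in> Hom C B D"
  have "A \<in> ob C" "B \<in> ob C" "D \<in> ob C" using hom_ob[OF f] hom_ob[OF g] by auto
  then show ?thesis using ax(3) f g by blast
qed

lemma assoc: "f \<in> Hom C A B \<Longrightarrow> g \<in> Hom C B D \<Longrightarrow> h \<in> Hom C D E \<Longrightarrow>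
   cmp C h (cmp C g f) = cmp C (cmp C h g) f"
proof -
  assume f: "f \<in> Hom C A B" and g: "g \<in> Hom C B D" and h: "h \<in> Hom C D E"
  have "A \<in> ob C" "B \<in> ob C" "D \<in> ob C" "E \<in> ob C" using hom_ob[OF f] hom_ob[OF g] hom_ob[OF h] by auto
  then show ?thesis using ax(4) f g h by blast
qed

lemma id_r: "f \<in> Hom C A B \<Longrightarrow> cmp C f (idm C A) = f" using ax(5) hom_ob by blast
lemma id_l: "f \<in> Hom C A B \<Longrightarrow> cmp C (idm C B) f = f" using ax(5) hom_ob by blast

lemma ax6: assumes "A \<in> ob C" "B \<in> ob C" shows
        "mzero C A B \<in> Hom C A B"
        "(\<forall>f \<in> Hom C A B. \<forall>g \<in> Hom C A B. madd C f g \<in> Hom C A B)"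
        "(\<forall>f \<in> Hom C A B. mneg C f \<in> Hom C A B)"
        "(\<forall>f \<in> Hom C A B. \<forall>g \<in> Hom C A B. \<forall>h \<in> Hom C A B.
           madd C (madd C f g) h = madd C f (madd C g h))"
        "(\<forall>f \<in> Hom C A B. \<forall>g \<in> Hom C A B. madd C f g = madd C g f)"
        "(\<forall>f \<in> Hom C A B. madd C f (mzero C A B) = f)"
        "(\<forall>f \<in> Hom C A B. madd C f (mneg C f) = mzero C A B)"
proof -
  have H: "mzero C A B \<in> Hom C A B \<and>
        (\<forall>f \<in> Hom C A B. \<forall>g \<in> Hom C A B. madd C f g \<in> Hom C A B) \<and>
        (\<forall>f \<in> Hom C A B. mneg C f \<in> Hom C A B) \<and>
        (\<forall>f \<in> Hom C A B. \<forall>g \<in> Hom C A B. \<forall>h \<in> Hom C A B.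
           madd C (madd C f g) h = madd C f (madd C g h)) \<and>
        (\<forall>f \<in> Hom C A B. \<forall>g \<in> Hom C A B. madd C f g = madd C g f) \<and>
        (\<forall>f \<in> Hom C A B. madd C f (mzero C A B) = f) \<and>
        (\<forall>f \<in> Hom C A B. madd C f (mneg C f) = mzero C A B)"
    using bspec[OF bspec[OF ax(6) assms(1)] assms(2)] .
  show "mzero C A B \<in> Hom C A B" using H by (elim conjE)
  show "(\<forall>f \<in> Hom C A B. \<forall>g \<in> Hom C A B. madd C f g \<in> Hom C A B)" using H by (elim conjE)
  show "(\<forall>f \<in> Hom C A B. mneg C f \<in> Hom C A B)" using H by (elim conjE)
  show "(\<forall>f \<in> Hom C A B. \<forall>g \<in> Hom C A B. \<forall>h \<in> Hom C A B.
           madd C (madd C f g) h = madd C f (madd C g h))" using H by (elim conjE)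
  show "(\<forall>f \<in> Hom C A B. \<forall>g \<in> Hom C A B. madd C f g = madd C g f)" using H by (elim conjE)
  show "(\<forall>f \<in> Hom C A B. madd C f (mzero C A B) = f)" using H by (elim conjE)
  show "(\<forall>f \<in> Hom C A B. madd C f (mneg C f) = mzero C A B)" using H by (elim conjE)
qed

lemma zero_hom: "A \<in> ob C \<Longrightarrow> B \<in> ob C \<Longrightarrow> mzero C A B \<in> Hom C A B" using ax6(1) by blast
lemma add_hom: "f \<in> Hom C A B \<Longrightarrow> g \<in> Hom C A B \<Longrightarrow> madd C f g \<in> Hom C A B"
  using ax6(2) hom_ob by blast
lemma neg_hom: "f \<in> Hom C A B \<Longrightarrow> mneg C f \<in> Hom C A B"
  using ax6(3) hom_ob by blast
lemma add_assoc: "f \<in> Hom C A B \<Longrightarrow> g \<in> Hom C A B \<Longrightarrow> h \<in> Hom C A B \<Longrightarrow>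
   madd C (madd C f g) h = madd C f (madd C g h)"
  using ax6(4) hom_ob by blast
lemma add_comm: "f \<in> Hom C A B \<Longrightarrow> g \<in> Hom C A B \<Longrightarrow> madd C f g = madd C g f"
  using ax6(5) hom_ob by blast
lemma add_zero: "f \<in> Hom C A B \<Longrightarrow> madd C f (mzero C A B) = f"
  using ax6(6) hom_ob by blast
lemma add_neg: "f \<in> Hom C A B \<Longrightarrow> madd C f (mneg C f) = mzero C A B"
  using ax6(7) hom_ob by blast

lemma bil: "f \<in> Hom C A B \<Longrightarrow> f' \<in> Hom C A B \<Longrightarrow> g \<in> Hom C B D \<Longrightarrow> g' \<in> Hom C B D \<Longrightarrow>
   cmp C g (madd C f f') = madd C (cmp C g f) (cmp C g f') \<and>
        cmp C (madd C g g') f = madd C (cmp C g f) (cmp C g' f)"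
proof -
  assume f: "f \<in> Hom C A B" and f': "f' \<in> Hom C A B" and g: "g \<in> Hom C B D" and g': "g' \<in> Hom C B D"
  have "A \<in> ob C" "B \<in> ob C" "D \<in> ob C" using hom_ob[OF f] hom_ob[OF g] by auto
  then show ?thesis using ax(7) f f' g g' by blast
qed

lemma comp_add_r: "f \<in> Hom C A B \<Longrightarrow> f' \<in> Hom C A B \<Longrightarrow> g \<in> Hom C B D \<Longrightarrow>
   cmp C g (madd C f f') = madd C (cmp C g f) (cmp C g f')"
  using bil by blast
lemma comp_add_l: "f \<in> Hom C A B \<Longrightarrow> g \<in> Hom C B D \<Longrightarrow> g' \<in> Hom C B D \<Longrightarrow>
   cmp C (madd C g g') f = madd C (cmp C g f) (cmp C g' f)"
  using bil by blast

lemma zero_add: assumes f: "f \<in> Hom C A B" shows "madd C (mzero C A B) f = f"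
proof -
  have z: "mzero C A B \<in> Hom C A B" using zero_hom hom_ob[OF f] by blast
  show ?thesis using add_comm[OF z f] add_zero[OF f] by simp
qed

lemma idem_zero: assumes z: "z \<in> Hom C A B" and e: "z = madd C z z" shows "z = mzero C A B"
proof -
  have n: "mneg C z \<in> Hom C A B" using neg_hom[OF z] .
  have "z = madd C z (madd C z (mneg C z))" using add_neg[OF z] add_zero[OF z] by simp
  also have "\<dots> = madd C (madd C z z) (mneg C z)" using add_assoc[OF z z n] by simp
  also have "\<dots> = mzero C A B" using e[symmetric] add_neg[OF z] by simp
  finally show ?thesis .
qed

lemma comp_zero_r: assumes g: "g \<in> Hom C B D" and A: "A \<in> ob C"
  shows "cmp C g (mzero C A B) = mzero C A D"
proof -
  have B: "B \<in> ob C" using g hom_ob by blast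
  have z: "mzero C A B \<in> Hom C A B" using zero_hom A B by blast
  have "cmp C g (mzero C A B) = cmp C g (madd C (mzero C A B) (mzero C A B))"
    using add_zero[OF z] by simp
  also have "\<dots> = madd C (cmp C g (mzero C A B)) (cmp C g (mzero C A B))"
    using comp_add_r[OF z z g] .
  finally show ?thesis using idem_zero comp_hom[OF z g] by blast
qed

lemma comp_zero_l: assumes f: "f \<in> Hom C A B" and D: "D \<in> ob C"
  shows "cmp C (mzero C B D) f = mzero C A D"
proof -
  have B: "B \<in> ob C" using f hom_ob by blast
  have z: "mzero C B D \<in> Hom C B D" using zero_hom D B by blast
  have "cmp C (mzero C B D) f = cmp C (madd C (mzero C B D) (mzero C B D)) f"
    using add_zero[OF z] by simp
  also have "\<dots> = madd C (cmp C (mzero C B D) f) (cmp C (mzero C B D) f)"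
    using comp_add_l[OF f z z] .
  finally show ?thesis using idem_zero comp_hom[OF f z] by blast
qed

lemma neg_unique: assumes f: "f \<in> Hom C A B" and g: "g \<in> Hom C A B"
  and s: "madd C f g = mzero C A B" shows "g = mneg C f"
proof -
  have n: "mneg C f \<in> Hom C A B" using neg_hom f by blast
  have "g = madd C (mzero C A B) g" using zero_add[OF g] by simp
  also have "\<dots> = madd C (madd C (mneg C f) f) g" using add_neg[OF f] add_comm[OF f n] by simp
  also have "\<dots> = madd C (mneg C f) (madd C f g)" using add_assoc[OF n f g] .
  also have "\<dots> = mneg C f" using s add_zero[OF n] by simp
  finally show ?thesis .
qed

lemma comp_neg_r: assumes f: "f \<in> Hom C A B" and g: "g \<in> Hom C B D"
  shows "cmp C g (mneg C f) = mneg C (cmp C g f)"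
proof (rule neg_unique)
  have n: "mneg C f \<in> Hom C A B" using neg_hom f by blast
  show "cmp C g f \<in> Hom C A D" using comp_hom f g by blast
  show "cmp C g (mneg C f) \<in> Hom C A D" using comp_hom[OF n g] .
  have "madd C (cmp C g f) (cmp C g (mneg C f)) = cmp C g (madd C f (mneg C f))"
    using comp_add_r[OF f n g] by simp
  also have "\<dots> = mzero C A D" using add_neg[OF f] comp_zero_r[OF g] hom_ob[OF f] by simp
  finally show "madd C (cmp C g f) (cmp C g (mneg C f)) = mzero C A D" .
qed

lemma comp_neg_l: assumes f: "f \<in> Hom C A B" and g: "g \<in> Hom C B D"
  shows "cmp C (mneg C g) f = mneg C (cmp C g f)"
proof (rule neg_unique)
  have n: "mneg C g \<in> Hom C B D" using neg_hom g by blast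
  show "cmp C g f \<in> Hom C A D" using comp_hom f g by blast
  show "cmp C (mneg C g) f \<in> Hom C A D" using comp_hom[OF f n] .
  have "madd C (cmp C g f) (cmp C (mneg C g) f) = cmp C (madd C g (mneg C g)) f"
    using comp_add_l[OF f g n] by simp
  also have "\<dots> = mzero C A D" using add_neg[OF g] comp_zero_l[OF f] hom_ob[OF g] by simp
  finally show "madd C (cmp C g f) (cmp C (mneg C g) f) = mzero C A D" .
qed

lemma swap_diff: assumes x: "x \<in> Hom C A B" and y: "y \<in> Hom C A B"
  shows "madd C (mneg C x) y = mneg C (madd C x (mneg C y))"
proof (rule neg_unique)
  have nx: "mneg C x \<in> Hom C A B" and ny: "mneg C y \<in> Hom C A B" using neg_hom x y by auto
  show "madd C x (mneg C y) \<in> Hom C A B" using add_hom x ny by blast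
  show "madd C (mneg C x) y \<in> Hom C A B" using add_hom nx y by blast
  have "madd C (madd C x (mneg C y)) (madd C (mneg C x) y)
      = madd C x (madd C (mneg C y) (madd C (mneg C x) y))"
    using add_assoc[OF x ny add_hom[OF nx y]] .
  also have "madd C (mneg C y) (madd C (mneg C x) y) = madd C (madd C (mneg C y) (mneg C x)) y"
    using add_assoc[OF ny nx y] by simp
  also have "madd C (mneg C y) (mneg C x) = madd C (mneg C x) (mneg C y)" using add_comm[OF ny nx] .
  also have "madd C (madd C (mneg C x) (mneg C y)) y = madd C (mneg C x) (madd C (mneg C y) y)"
    using add_assoc[OF nx ny y] .
  also have "madd C (mneg C y) y = mzero C A B" using add_comm[OF y ny] add_neg[OF y] by simp
  also have "madd C (mneg C x) (mzero C A B) = mneg C x" using add_zero[OF nx] .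
  finally show "madd C (madd C x (mneg C y)) (madd C (mneg C x) y) = mzero C A B"
    using add_neg[OF x] by simp
qed


lemma seq_hom: "right_n_exact C n A f \<Longrightarrow> k \<le> n \<Longrightarrow> f k \<in> Hom C (A k) (A (Suc k))"
  unfolding right_n_exact_def is_sequence_def by blast

lemma factor:
  assumes r: "right_n_exact C n A f" and m: "1 \<le> m" "m \<le> n" and D: "D \<in> ob C"
    and e: "e \<in> Hom C (A m) D" and ez: "cmp C e (f (m-1)) = mzero C (A (m-1)) D"
  shows "\<exists>t\<in>Hom C (A (Suc m)) D. e = cmp C t (f m)"
proof -
  have f1: "f (m-1) \<in> Hom C (A (m-1)) (A m)" using seq_hom[OF r, of "m-1"] m by simp
  have f2: "f m \<in> Hom C (A m) (A (Suc m))" using seq_hom[OF r] m by simp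
  have s1: "src C (f (m-1)) = A (m-1)" "tgt C (f (m-1)) = A m" using hom_mor[OF f1] by auto
  have s2: "tgt C (f m) = A (Suc m)" using hom_mor[OF f2] by auto
  show ?thesis
  proof (cases "m \<le> n - 1")
    case True
    then have "weak_cokernel C (f (m-1)) (f m)" using r m unfolding right_n_exact_def by blast
    then show ?thesis using D e ez s1 s2 unfolding weak_cokernel_def by metis
  next
    case False
    then have "m = n" using m by simp
    then have "cokernel C (f (m-1)) (f m)" using r unfolding right_n_exact_def by blast
    then show ?thesis using D e ez s1 s2 unfolding cokernel_def by metis
  qed
qed

lemma seq_zero:
  assumes r: "right_n_exact C n Y \<alpha>" and m: "1 \<le> m" "m \<le> n"
  shows "cmp C (\<alpha> m) (\<alpha> (m-1)) = mzero C (Y (m-1)) (Y (Suc m))"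
proof -
  have f1: "\<alpha> (m-1) \<in> Hom C (Y (m-1)) (Y m)" using seq_hom[OF r, of "m-1"] m by simp
  have f2: "\<alpha> m \<in> Hom C (Y m) (Y (Suc m))" using seq_hom[OF r] m by simp
  have s1: "src C (\<alpha> (m-1)) = Y (m-1)" using hom_mor[OF f1] by auto
  have s2: "tgt C (\<alpha> m) = Y (Suc m)" using hom_mor[OF f2] by auto
  show ?thesis
  proof (cases "m \<le> n - 1")
    case True
    then have "weak_cokernel C (\<alpha> (m-1)) (\<alpha> m)" using r m unfolding right_n_exact_def by blast
    then show ?thesis using s1 s2 unfolding weak_cokernel_def by metis
  next
    case False
    then have "m = n" using m by simp
    then have "cokernel C (\<alpha> (m-1)) (\<alpha> m)" using r unfolding right_n_exact_def by blast
    then show ?thesis using s1 s2 unfolding cokernel_def by metis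
  qed
qed

lemma coker_zero:
  assumes r: "right_n_exact C n A f" and n: "1 \<le> n"
    and e: "e \<in> Hom C (A (Suc n)) D" and ez: "cmp C e (f n) = mzero C (A n) D"
  shows "e = mzero C (A (Suc n)) D"
proof -
  have ck: "cokernel C (f (n-1)) (f n)" using r unfolding right_n_exact_def by blast
  have f1: "f (n-1) \<in> Hom C (A (n-1)) (A n)" using seq_hom[OF r, of "n-1"] n by simp
  have f2: "f n \<in> Hom C (A n) (A (Suc n))" using seq_hom[OF r] by simp
  have s1: "src C (f (n-1)) = A (n-1)" "tgt C (f (n-1)) = A n" using hom_mor[OF f1] by auto
  have s2: "tgt C (f n) = A (Suc n)" using hom_mor[OF f2] by auto
  have D: "D \<in> ob C" using hom_ob[OF e] by blast
  have h: "cmp C e (f n) \<in> Hom C (A n) D" using comp_hom[OF f2 e] .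
  have hz: "cmp C (cmp C e (f n)) (f (n-1)) = mzero C (A (n-1)) D"
    using ez comp_zero_l[OF f1 D] by simp
  have z: "mzero C (A (Suc n)) D \<in> Hom C (A (Suc n)) D" using zero_hom hom_ob[OF e] by blast
  have zz: "cmp C e (f n) = cmp C (mzero C (A (Suc n)) D) (f n)" using ez comp_zero_l[OF f2 D] by simp
  have "\<exists>!k. k \<in> Hom C (A (Suc n)) D \<and> cmp C e (f n) = cmp C k (f n)"
    using ck D h hz s1 s2 unfolding cokernel_def by metis
  then show ?thesis using e z zz by blast
qed

lemma homotopy:
  assumes n: "1 \<le> n" and rA: "right_n_exact C n A f" and rY: "right_n_exact C n Y \<alpha>"
    and dh: "\<forall>i \<le> Suc n. d i \<in> Hom C (A i) (Y i)"
    and dc: "\<forall>i \<le> n. cmp C (d (Suc i)) (f i) = cmp C (\<alpha> i) (d i)"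
    and d0: "d 0 = mzero C (A 0) (Y 0)"
  shows "\<exists>t \<in> Hom C (A (Suc n)) (Y n). d (Suc n) = cmp C (\<alpha> n) t"
proof -
  have fh: "\<And>k. k \<le> n \<Longrightarrow> f k \<in> Hom C (A k) (A (Suc k))" using seq_hom[OF rA] .
  have ah: "\<And>k. k \<le> n \<Longrightarrow> \<alpha> k \<in> Hom C (Y k) (Y (Suc k))" using seq_hom[OF rY] .
  have Yob: "\<And>k. k \<le> Suc n \<Longrightarrow> Y k \<in> ob C" using dh hom_ob by blast
  have Aob: "\<And>k. k \<le> Suc n \<Longrightarrow> A k \<in> ob C" using dh hom_ob by blast
  have claim: "m \<le> n \<longrightarrow> (\<exists>t e. t \<in> Hom C (A (Suc m)) (Y m) \<and> e \<in> Hom C (A (Suc m)) (Y (Suc m)) \<and>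
      d (Suc m) = madd C e (cmp C (\<alpha> m) t) \<and> cmp C e (f m) = mzero C (A m) (Y (Suc m)))" for m
  proof (induction m)
    case 0
    show ?case
    proof
      assume "0 \<le> n"
      define t where "t = mzero C (A 1) (Y 0)"
      have th: "t \<in> Hom C (A (Suc 0)) (Y 0)" unfolding t_def using zero_hom Aob Yob n by simp
      have d1: "d (Suc 0) \<in> Hom C (A (Suc 0)) (Y (Suc 0))" using dh by simp
      have a0: "\<alpha> 0 \<in> Hom C (Y 0) (Y (Suc 0))" using ah by simp
      have "cmp C (\<alpha> 0) t = mzero C (A (Suc 0)) (Y (Suc 0))"
        unfolding t_def using comp_zero_r[OF a0] Aob n by simp
      then have e1: "d (Suc 0) = madd C (d (Suc 0)) (cmp C (\<alpha> 0) t)" using add_zero[OF d1] by simp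
      have "cmp C (d (Suc 0)) (f 0) = cmp C (\<alpha> 0) (d 0)" using dc by simp
      also have "\<dots> = mzero C (A 0) (Y (Suc 0))" using d0 comp_zero_r[OF a0] Aob by simp
      finally show "\<exists>t e. t \<in> Hom C (A (Suc 0)) (Y 0) \<and> e \<in> Hom C (A (Suc 0)) (Y (Suc 0)) \<and>
      d (Suc 0) = madd C e (cmp C (\<alpha> 0) t) \<and> cmp C e (f 0) = mzero C (A 0) (Y (Suc 0))"
        using th d1 e1 by blast
    qed
  next
    case (Suc m)
    show ?case
    proof
      assume sm: "Suc m \<le> n"
      then obtain t e where t: "t \<in> Hom C (A (Suc m)) (Y m)" and e: "e \<in> Hom C (A (Suc m)) (Y (Suc m))"
        and de: "d (Suc m) = madd C e (cmp C (\<alpha> m) t)" and ez: "cmp C e (f m) = mzero C (A m) (Y (Suc m))"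
        using Suc.IH by auto
      obtain t' where t': "t' \<in> Hom C (A (Suc (Suc m))) (Y (Suc m))" and et: "e = cmp C t' (f (Suc m))"
        using factor[OF rA _ sm Yob[of "Suc m"] e] ez sm by auto
      have a1: "\<alpha> (Suc m) \<in> Hom C (Y (Suc m)) (Y (Suc (Suc m)))" using ah sm by simp
      have a0: "\<alpha> m \<in> Hom C (Y m) (Y (Suc m))" using ah sm by simp
      have f1: "f (Suc m) \<in> Hom C (A (Suc m)) (A (Suc (Suc m)))" using fh sm by simp
      have d2: "d (Suc (Suc m)) \<in> Hom C (A (Suc (Suc m))) (Y (Suc (Suc m)))" using dh sm by simp
      define p where "p = cmp C (\<alpha> (Suc m)) t'"
      have p: "p \<in> Hom C (A (Suc (Suc m))) (Y (Suc (Suc m)))" unfolding p_def using comp_hom[OF t' a1] .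
      have np: "mneg C p \<in> Hom C (A (Suc (Suc m))) (Y (Suc (Suc m)))" using neg_hom[OF p] .
      define e' where "e' = madd C (d (Suc (Suc m))) (mneg C p)"
      have e': "e' \<in> Hom C (A (Suc (Suc m))) (Y (Suc (Suc m)))" unfolding e'_def using add_hom[OF d2 np] .
      have "madd C e' p = madd C (d (Suc (Suc m))) (madd C (mneg C p) p)"
        unfolding e'_def using add_assoc[OF d2 np p] .
      also have "madd C (mneg C p) p = mzero C (A (Suc (Suc m))) (Y (Suc (Suc m)))"
        using add_comm[OF np p] add_neg[OF p] by simp
      finally have de': "d (Suc (Suc m)) = madd C e' p" using add_zero[OF d2] by simp
      have aa: "cmp C (\<alpha> (Suc m)) (\<alpha> m) = mzero C (Y m) (Y (Suc (Suc m)))"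
        using seq_zero[OF rY, of "Suc m"] sm by simp
      have "cmp C (\<alpha> (Suc m)) (d (Suc m))
          = madd C (cmp C (\<alpha> (Suc m)) e) (cmp C (\<alpha> (Suc m)) (cmp C (\<alpha> m) t))"
        using de comp_add_r[OF e comp_hom[OF t a0] a1] by simp
      also have "cmp C (\<alpha> (Suc m)) (cmp C (\<alpha> m) t) = mzero C (A (Suc m)) (Y (Suc (Suc m)))"
        using assoc[OF t a0 a1] aa comp_zero_l[OF t] Yob sm by simp
      finally have ad: "cmp C (\<alpha> (Suc m)) (d (Suc m)) = cmp C (\<alpha> (Suc m)) e"
        using add_zero[OF comp_hom[OF e a1]] by simp
      have pf: "cmp C p (f (Suc m)) = cmp C (\<alpha> (Suc m)) e"
        unfolding p_def et using assoc[OF f1 t' a1] by simp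
      have "cmp C e' (f (Suc m)) = madd C (cmp C (d (Suc (Suc m))) (f (Suc m))) (cmp C (mneg C p) (f (Suc m)))"
        unfolding e'_def using comp_add_l[OF f1 d2 np] .
      also have "cmp C (mneg C p) (f (Suc m)) = mneg C (cmp C (\<alpha> (Suc m)) e)"
        using comp_neg_l[OF f1 p] pf by simp
      also have "cmp C (d (Suc (Suc m))) (f (Suc m)) = cmp C (\<alpha> (Suc m)) e"
        using dc sm ad by simp
      finally have "cmp C e' (f (Suc m)) = mzero C (A (Suc m)) (Y (Suc (Suc m)))"
        using add_neg[OF comp_hom[OF e a1]] by simp
      then show "\<exists>t e. t \<in> Hom C (A (Suc (Suc m))) (Y (Suc m)) \<and> e \<in> Hom C (A (Suc (Suc m))) (Y (Suc (Suc m))) \<and>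
      d (Suc (Suc m)) = madd C e (cmp C (\<alpha> (Suc m)) t) \<and> cmp C e (f (Suc m)) = mzero C (A (Suc m)) (Y (Suc (Suc m)))"
        using t' e' de' unfolding p_def by blast
    qed
  qed
  obtain t e where t: "t \<in> Hom C (A (Suc n)) (Y n)" and e: "e \<in> Hom C (A (Suc n)) (Y (Suc n))"
    and de: "d (Suc n) = madd C e (cmp C (\<alpha> n) t)" and ez: "cmp C e (f n) = mzero C (A n) (Y (Suc n))"
    using claim[of n] by auto
  have "e = mzero C (A (Suc n)) (Y (Suc n))" using coker_zero[OF rA n e ez] .
  then have "d (Suc n) = cmp C (\<alpha> n) t" using de zero_add[OF comp_hom[OF t ah[of n]]] by simp
  then show ?thesis using t by blast
qed


lemma neg_neg: "y \<in> Hom C A B \<Longrightarrow> mneg C (mneg C y) = y"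
  using neg_unique[OF neg_hom, of y A B y] add_comm[OF neg_hom, of y] add_neg by metis

lemma ft: "F \<in> Hom C P Q \<Longrightarrow> u \<in> Hom C P Y \<Longrightarrow> v \<in> Hom C Y Q \<Longrightarrow> Y \<in> X \<Longrightarrow> F = cmp C v u
   \<Longrightarrow> factors_through C X F"
  unfolding factors_through_def using hom_mor by metis

end

theorem lemma3p3:
  fixes C :: "('o, 'm) addcat" and X :: "'o set" and n :: nat
    and SObj :: "'o \<Rightarrow> nat \<Rightarrow> 'o" and SMor :: "'o \<Rightarrow> nat \<Rightarrow> 'm"
    and A B :: "nat \<Rightarrow> 'o" and f g h a b c :: "nat \<Rightarrow> 'm"
  assumes cat: "additive_category C"
    and n1: "1 \<le> n"
    and sub: "subcategory C X"
    and cf: "covariantly_finite C X"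
    and spec: "\<forall>A0 \<in> ob C. \<forall>\<alpha>. left_approx C X A0 \<alpha> \<longrightarrow> has_special_n_cokernel C X n \<alpha>"
    and sig: "sigma_data C X n SObj SMor"
    and rowA: "right_n_exact C n A f" and monA: "X_monic C X (f 0)"
    and rowB: "right_n_exact C n B g" and monB: "X_monic C X (g 0)"
    and hlad: "ladder C n A f B g h"
    and alad: "ladder C n A f (SObj (A 0)) (SMor (A 0)) a" and a0: "a 0 = idm C (A 0)"
    and blad: "ladder C n B g (SObj (B 0)) (SMor (B 0)) b" and b0: "b 0 = idm C (B 0)"
    and clad: "ladder C n (SObj (A 0)) (SMor (A 0)) (SObj (B 0)) (SMor (B 0)) c"
    and c0: "c 0 = h 0"
  shows "(\<forall>i \<le> n. quot_eq C X (cmp C (h (Suc i)) (f i)) (cmp C (g i) (h i))) \<and>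
         quot_eq C X (cmp C (c (Suc n)) (sign_mor C n (a (Suc n))))
                     (cmp C (sign_mor C n (b (Suc n))) (h (Suc n))) \<and>
         quot_eq C X (cmp C (c (Suc n)) (a (Suc n))) (cmp C (b (Suc n)) (h (Suc n)))"
proof -
  interpret ac C by (rule ac.intro[OF cat])
  define Y where "Y = SObj (B 0)"
  define \<alpha> where "\<alpha> = SMor (B 0)"
  define Y' where "Y' = SObj (A 0)"
  have hh: "\<And>i. i \<le> Suc n \<Longrightarrow> h i \<in> Hom C (A i) (B i)" using hlad unfolding ladder_def by blast
  have ah: "\<And>i. i \<le> Suc n \<Longrightarrow> a i \<in> Hom C (A i) (Y' i)" using alad unfolding ladder_def Y'_def by blast
  have bh: "\<And>i. i \<le> Suc n \<Longrightarrow> b i \<in> Hom C (B i) (Y i)" using blad unfolding ladder_def Y_def by blast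
  have ch: "\<And>i. i \<le> Suc n \<Longrightarrow> c i \<in> Hom C (Y' i) (Y i)" using clad unfolding ladder_def Y_def Y'_def by blast
  have hc: "\<And>i. i \<le> n \<Longrightarrow> cmp C (h (Suc i)) (f i) = cmp C (g i) (h i)" using hlad unfolding ladder_def by blast
  have ac: "\<And>i. i \<le> n \<Longrightarrow> cmp C (a (Suc i)) (f i) = cmp C (SMor (A 0) i) (a i)" using alad unfolding ladder_def by blast
  have bc: "\<And>i. i \<le> n \<Longrightarrow> cmp C (b (Suc i)) (g i) = cmp C (\<alpha> i) (b i)" using blad unfolding ladder_def \<alpha>_def by blast
  have cc: "\<And>i. i \<le> n \<Longrightarrow> cmp C (c (Suc i)) (SMor (A 0) i) = cmp C (\<alpha> i) (c i)" using clad unfolding ladder_def \<alpha>_def by blast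
  have A0: "A 0 \<in> ob C" and B0: "B 0 \<in> ob C" using hom_ob[OF hh[of 0]] by auto
  have sB: "Y 0 = B 0" "right_n_exact C n Y \<alpha>" "Y n \<in> X"
    using sig B0 n1 unfolding sigma_data_def Y_def \<alpha>_def by auto
  have sA: "Y' 0 = A 0" "right_n_exact C n Y' (SMor (A 0))"
    using sig A0 unfolding sigma_data_def Y'_def by auto
  have fh: "\<And>i. i \<le> n \<Longrightarrow> f i \<in> Hom C (A i) (A (Suc i))" using seq_hom[OF rowA] .
  have gh: "\<And>i. i \<le> n \<Longrightarrow> g i \<in> Hom C (B i) (B (Suc i))" using seq_hom[OF rowB] .
  have alh: "\<And>i. i \<le> n \<Longrightarrow> \<alpha> i \<in> Hom C (Y i) (Y (Suc i))" using seq_hom[OF sB(2)] .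
  have alh': "\<And>i. i \<le> n \<Longrightarrow> SMor (A 0) i \<in> Hom C (Y' i) (Y' (Suc i))" using seq_hom[OF sA(2)] .
  define d where "d i = mdiff C (cmp C (c i) (a i)) (cmp C (b i) (h i))" for i
  have cah: "\<And>i. i \<le> Suc n \<Longrightarrow> cmp C (c i) (a i) \<in> Hom C (A i) (Y i)" using comp_hom ah ch by blast
  have bhh: "\<And>i. i \<le> Suc n \<Longrightarrow> cmp C (b i) (h i) \<in> Hom C (A i) (Y i)" using comp_hom hh bh by blast
  have dh: "\<forall>i \<le> Suc n. d i \<in> Hom C (A i) (Y i)"
    unfolding d_def mdiff_def using add_hom neg_hom cah bhh by blast
  have dc: "\<forall>i \<le> n. cmp C (d (Suc i)) (f i) = cmp C (\<alpha> i) (d i)"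
  proof (intro allI impI)
    fix i assume i: "i \<le> n"
    have c1: "cmp C (cmp C (c (Suc i)) (a (Suc i))) (f i) = cmp C (\<alpha> i) (cmp C (c i) (a i))"
    proof -
      have "cmp C (cmp C (c (Suc i)) (a (Suc i))) (f i) = cmp C (c (Suc i)) (cmp C (a (Suc i)) (f i))"
        using assoc[OF fh[OF i] ah[of "Suc i"] ch[of "Suc i"]] i by simp
      also have "\<dots> = cmp C (c (Suc i)) (cmp C (SMor (A 0) i) (a i))" using ac i by simp
      also have "\<dots> = cmp C (cmp C (c (Suc i)) (SMor (A 0) i)) (a i)"
        using assoc[OF ah[of i] alh'[OF i] ch[of "Suc i"]] i by simp
      also have "\<dots> = cmp C (cmp C (\<alpha> i) (c i)) (a i)" using cc i by simp
      also have "\<dots> = cmp C (\<alpha> i) (cmp C (c i) (a i))"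
        using assoc[OF ah[of i] ch[of i] alh[OF i]] i by simp
      finally show ?thesis .
    qed
    have c2: "cmp C (cmp C (b (Suc i)) (h (Suc i))) (f i) = cmp C (\<alpha> i) (cmp C (b i) (h i))"
    proof -
      have "cmp C (cmp C (b (Suc i)) (h (Suc i))) (f i) = cmp C (b (Suc i)) (cmp C (h (Suc i)) (f i))"
        using assoc[OF fh[OF i] hh[of "Suc i"] bh[of "Suc i"]] i by simp
      also have "\<dots> = cmp C (b (Suc i)) (cmp C (g i) (h i))" using hc i by simp
      also have "\<dots> = cmp C (cmp C (b (Suc i)) (g i)) (h i)"
        using assoc[OF hh[of i] gh[OF i] bh[of "Suc i"]] i by simp
      also have "\<dots> = cmp C (cmp C (\<alpha> i) (b i)) (h i)" using bc i by simp
      also have "\<dots> = cmp C (\<alpha> i) (cmp C (b i) (h i))"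
        using assoc[OF hh[of i] bh[of i] alh[OF i]] i by simp
      finally show ?thesis .
    qed
    have "cmp C (d (Suc i)) (f i) = madd C (cmp C (cmp C (c (Suc i)) (a (Suc i))) (f i))
        (cmp C (mneg C (cmp C (b (Suc i)) (h (Suc i)))) (f i))"
      unfolding d_def mdiff_def using comp_add_l[OF fh[OF i] cah[of "Suc i"] neg_hom[OF bhh[of "Suc i"]]] i by simp
    also have "\<dots> = madd C (cmp C (\<alpha> i) (cmp C (c i) (a i))) (mneg C (cmp C (\<alpha> i) (cmp C (b i) (h i))))"
      using c1 c2 comp_neg_l[OF fh[OF i] bhh[of "Suc i"]] i by simp
    also have "\<dots> = madd C (cmp C (\<alpha> i) (cmp C (c i) (a i))) (cmp C (\<alpha> i) (mneg C (cmp C (b i) (h i))))"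
      using comp_neg_r[OF bhh[of i] alh[OF i]] i by simp
    also have "\<dots> = cmp C (\<alpha> i) (d i)"
      unfolding d_def mdiff_def using comp_add_r[OF cah[of i] neg_hom[OF bhh[of i]] alh[OF i]] i by simp
    finally show "cmp C (d (Suc i)) (f i) = cmp C (\<alpha> i) (d i)" .
  qed
  have d0: "d 0 = mzero C (A 0) (Y 0)"
  proof -
    have h0: "h 0 \<in> Hom C (A 0) (B 0)" using hh by simp
    have "cmp C (c 0) (a 0) = h 0" using c0 a0 id_r[OF h0] by simp
    moreover have "cmp C (b 0) (h 0) = h 0" using b0 id_l[OF h0] by simp
    ultimately show ?thesis unfolding d_def mdiff_def using add_neg[OF h0] sB(1) by simp
  qed
  obtain t where t: "t \<in> Hom C (A (Suc n)) (Y n)" and dt: "d (Suc n) = cmp C (\<alpha> n) t"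
    using homotopy[OF n1 rowA sB(2) dh dc d0] by blast
  have x: "cmp C (c (Suc n)) (a (Suc n)) \<in> Hom C (A (Suc n)) (Y (Suc n))" using cah by simp
  have y: "cmp C (b (Suc n)) (h (Suc n)) \<in> Hom C (A (Suc n)) (Y (Suc n))" using bhh by simp
  have an: "\<alpha> n \<in> Hom C (Y n) (Y (Suc n))" using alh by simp
  have P3: "quot_eq C X (cmp C (c (Suc n)) (a (Suc n))) (cmp C (b (Suc n)) (h (Suc n)))"
    unfolding quot_eq_def
  proof (intro conjI)
    show "factors_through C X (mdiff C (cmp C (c (Suc n)) (a (Suc n))) (cmp C (b (Suc n)) (h (Suc n))))"
      using ft[OF _ t an sB(3)] dh dt unfolding d_def by blast
  qed (use x y hom_mor in auto)
  have P2: "quot_eq C X (cmp C (c (Suc n)) (sign_mor C n (a (Suc n))))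
                     (cmp C (sign_mor C n (b (Suc n))) (h (Suc n)))"
  proof (cases "even n")
    case True then show ?thesis using P3 unfolding sign_mor_def by simp
  next
    case False
    have e1: "cmp C (c (Suc n)) (mneg C (a (Suc n))) = mneg C (cmp C (c (Suc n)) (a (Suc n)))"
      using comp_neg_r[OF ah[of "Suc n"] ch[of "Suc n"]] by simp
    have e2: "cmp C (mneg C (b (Suc n))) (h (Suc n)) = mneg C (cmp C (b (Suc n)) (h (Suc n)))"
      using comp_neg_l[OF hh[of "Suc n"] bh[of "Suc n"]] by simp
    have x': "mneg C (cmp C (c (Suc n)) (a (Suc n))) \<in> Hom C (A (Suc n)) (Y (Suc n))" using neg_hom[OF x] .
    have y': "mneg C (cmp C (b (Suc n)) (h (Suc n))) \<in> Hom C (A (Suc n)) (Y (Suc n))" using neg_hom[OF y] .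
    have "mdiff C (mneg C (cmp C (c (Suc n)) (a (Suc n)))) (mneg C (cmp C (b (Suc n)) (h (Suc n))))
        = madd C (mneg C (cmp C (c (Suc n)) (a (Suc n)))) (cmp C (b (Suc n)) (h (Suc n)))"
      unfolding mdiff_def using neg_neg[OF y] by simp
    also have "\<dots> = mneg C (d (Suc n))" unfolding d_def mdiff_def using swap_diff[OF x y] .
    also have "\<dots> = cmp C (\<alpha> n) (mneg C t)" using dt comp_neg_r[OF t an] by simp
    finally have ee: "mdiff C (mneg C (cmp C (c (Suc n)) (a (Suc n)))) (mneg C (cmp C (b (Suc n)) (h (Suc n))))
        = cmp C (\<alpha> n) (mneg C t)" .
    have mh: "mdiff C (mneg C (cmp C (c (Suc n)) (a (Suc n)))) (mneg C (cmp C (b (Suc n)) (h (Suc n))))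
       \<in> Hom C (A (Suc n)) (Y (Suc n))" unfolding mdiff_def using add_hom[OF x' neg_hom[OF y']] .
    have "quot_eq C X (mneg C (cmp C (c (Suc n)) (a (Suc n)))) (mneg C (cmp C (b (Suc n)) (h (Suc n))))"
      unfolding quot_eq_def
    proof (intro conjI)
      show "factors_through C X (mdiff C (mneg C (cmp C (c (Suc n)) (a (Suc n)))) (mneg C (cmp C (b (Suc n)) (h (Suc n)))))"
        using ft[OF mh neg_hom[OF t] an sB(3) ee] .
    qed (use x' y' hom_mor in auto)
    then show ?thesis using False e1 e2 unfolding sign_mor_def by simp
  qed
  have P1: "\<forall>i \<le> n. quot_eq C X (cmp C (h (Suc i)) (f i)) (cmp C (g i) (h i))"
  proof (intro allI impI)
    fix i assume i: "i \<le> n"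
    have xh: "cmp C (h (Suc i)) (f i) \<in> Hom C (A i) (B (Suc i))" using comp_hom[OF fh[OF i] hh[of "Suc i"]] i by simp
    have Yn: "Y n \<in> ob C" using hom_ob[OF t] by blast
    have Ai: "A i \<in> ob C" and Bi: "B (Suc i) \<in> ob C" using hom_ob[OF xh] by auto
    have md: "mdiff C (cmp C (h (Suc i)) (f i)) (cmp C (h (Suc i)) (f i)) = mzero C (A i) (B (Suc i))"
      unfolding mdiff_def using add_neg[OF xh] .
    have u: "mzero C (A i) (Y n) \<in> Hom C (A i) (Y n)" using zero_hom Ai Yn by blast
    have v: "mzero C (Y n) (B (Suc i)) \<in> Hom C (Y n) (B (Suc i))" using zero_hom Bi Yn by blast
    have "factors_through C X (mdiff C (cmp C (h (Suc i)) (f i)) (cmp C (h (Suc i)) (f i)))"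
      using ft[OF _ u v sB(3)] md comp_zero_l[OF u Bi] zero_hom[OF Ai Bi] by metis
    then show "quot_eq C X (cmp C (h (Suc i)) (f i)) (cmp C (g i) (h i))"
      unfolding quot_eq_def using hc[OF i] xh hom_mor by auto
  qed
  show ?thesis using P1 P2 P3 by blast
qed

end
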